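(* Consider $\texttt{CCI}_{n,\mu}(T,C,I,J)$ with $\mathcal{S},\mathcal{C}^{\text{out}},\mathcal{C}^{\text{in}}\subseteq\mathbb{N}$, $\mathbb{E}[T^{1+\varepsilon}]<\infty$ for some $\varepsilon>0$, $\inf_i\{\lambda_i:\lambda_i>0\}>0$ and $\inf_j\{\varrho_j:\varrho_j>0\}>0$. Fix $\tau\in(0,1)$ and let $S_t$ denote the number of self-loops on vertices of type $t$. Then for all $r>0$ and $\nu<\tau$, for all sufficiently large $n$, $$\mathbb{P}\Big(\bigcup_{t=1}^{u_n^\uparrow(\tau)}\{S_t>n^{1-\nu}\}\Big)\le n^{-r}.$$
   Context: Inputs: type distribution $T$ on $\mathcal{S}$, $q_k=\mathbb{P}(T=k)$; colour distribution $C=(C^{\text{out}},C^{\text{in}})$; indicators $I:\mathcal{S}\times\mathcal{C}^{\text{out}}\to\{0,1\}$, $J:\mathcal{S}\times\mathcal{C}^{\text{in}}\to\{0,1\}$; $\mu>0$; $\lambda_i=\sum_kq_kI(k,i)$, $\varrho_j=\sum_kq_kJ(k,j)$. $\texttt{CCI}_{n,\mu}(T,C,I,J)$: vertex set $[n]$, i.i.d. types $T_v\sim T$; for each $a\in[\lfloor\mu n\rfloor]$ an independent colour $C_a\sim C$; choose $v$ uniformly from $\{v:I(T_v,C^{\text{out}}_a)=1\}$ and independently $w$ uniformly from $\{w:J(T_w,C^{\text{in}}_a)=1\}$, and add arc $(v,w)$ (loops and multiple arcs allowed). $u_n^\uparrow(\tau)=\inf\{t:q_s<n^{-1+\tau}\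 \forall s\ge t\}$. *)

theory Defs
  imports "HOL-Probability.Probability"
begin

text \<open>Vertices are 0..n-1 (a relabelling of [n]); types and colours are natural numbers.
  A graph outcome is a pair (tp, arcs): tp v is the type of vertex v, arcs a is the arc
  number a (for a < floor(mu n)), as Some (v, w), or None if no arc could be placed
  because one of the candidate sets was empty (convention).\<close>

definition lam :: "nat pmf \<Rightarrow> (nat \<Rightarrow> nat \<Rightarrow> bool) \<Rightarrow> nat \<Rightarrow> real" where
  "lam T I i = measure_pmf.prob T {k. I k i}"

definition rho :: "nat pmf \<Rightarrow> (nat \<Rightarrow> nat \<Rightarrow> bool) \<Rightarrow> nat \<Rightarrow> real" where
  "rho T J j = measure_pmf.prob T {k. J k j}"

definition num_arcs :: "nat \<Rightarrow> real \<Rightarrow> nat" where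
  "num_arcs n \<mu> = nat \<lfloor>\<mu> * real n\<rfloor>"

definition arc_pmf :: "nat \<Rightarrow> (nat \<times> nat) pmf \<Rightarrow> (nat \<Rightarrow> nat \<Rightarrow> bool) \<Rightarrow> (nat \<Rightarrow> nat \<Rightarrow> bool)
    \<Rightarrow> (nat \<Rightarrow> nat) \<Rightarrow> (nat \<times> nat) option pmf" where
  "arc_pmf n C I J tp =
     bind_pmf C (\<lambda>c.
       (let Out = {v. v < n \<and> I (tp v) (fst c)};
            In = {w. w < n \<and> J (tp w) (snd c)}
        in if Out = {} \<or> In = {} then return_pmf None
           else map_pmf Some (pair_pmf (pmf_of_set Out) (pmf_of_set In))))"

definition CCI :: "nat \<Rightarrow> real \<Rightarrow> nat pmf \<Rightarrow> (nat \<times> nat) pmf \<Rightarrow> (nat \<Rightarrow> nat \<Rightarrow> bool)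
    \<Rightarrow> (nat \<Rightarrow> nat \<Rightarrow> bool) \<Rightarrow> ((nat \<Rightarrow> nat) \<times> (nat \<Rightarrow> (nat \<times> nat) option)) pmf" where
  "CCI n \<mu> T C I J =
     bind_pmf (Pi_pmf {..<n} 0 (\<lambda>_. T)) (\<lambda>tp.
       bind_pmf (Pi_pmf {..<num_arcs n \<mu>} None (\<lambda>_. arc_pmf n C I J tp)) (\<lambda>arcs.
         return_pmf (tp, arcs)))"

definition self_loops :: "nat \<Rightarrow> nat \<Rightarrow> (nat \<Rightarrow> nat) \<times> (nat \<Rightarrow> (nat \<times> nat) option) \<Rightarrow> nat" where
  "self_loops m t G = card {a. a < m \<and> (\<exists>v. snd G a = Some (v, v) \<and> fst G v = t)}"

definition u_up :: "nat pmf \<Rightarrow> nat \<Rightarrow> real \<Rightarrow> nat" where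
  "u_up T n \<tau> = Inf {t. \<forall>s\<ge>t. pmf T s < real n powr (-1 + \<tau>)}"

end

theory Submission imports Defs "HOL-Real_Asymp.Real_Asymp" begin

lemma prob_bind_pmf:
  "measure_pmf.prob (bind_pmf M N) X = measure_pmf.expectation M (\<lambda>x. measure_pmf.prob (N x) X)"
proof -
  have "ennreal (measure_pmf.prob (bind_pmf M N) X) = emeasure (bind_pmf M N) X"
    by (simp only: measure_pmf.emeasure_eq_measure)
  also have "\<dots> = (\<integral>\<^sup>+x. emeasure (N x) X \<partial>M)"
    by (rule emeasure_bind_pmf)
  also have "\<dots> = (\<integral>\<^sup>+x. ennreal (measure_pmf.prob (N x) X) \<partial>M)"
    by (simp only: measure_pmf.emeasure_eq_measure)
  also have "\<dots> = ennreal (measure_pmf.expectation M (\<lambda>x. measure_pmf.prob (N x) X))"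
    by (intro nn_integral_eq_integral measure_pmf.integrable_const_bound[where B=1]) auto
  finally show ?thesis by (simp add: integral_nonneg_AE)
qed

lemma integrable_pmf_bounded:
  fixes f :: "'a \<Rightarrow> real"
  assumes "\<And>x. x \<in> set_pmf M \<Longrightarrow> \<bar>f x\<bar> \<le> B"
  shows "integrable (measure_pmf M) f"
  by (intro measure_pmf.integrable_const_bound[where B=B]) (auto simp: AE_measure_pmf_iff assms)

lemma prob_Pi_count_ge:
  "measure_pmf.prob (Pi_pmf {..<m} d (\<lambda>_. p)) {f. s \<le> card {a. a < m \<and> f a \<in> S}}
     \<le> real (m choose s) * measure_pmf.prob p S ^ s"
proof -
  define q where "q = measure_pmf.prob p S"
  define U where "U = {A. A \<subseteq> {..<m} \<and> card A = s}"
  define F where "F = (\<lambda>A. Pi {..<m} (\<lambda>a. if a \<in> A then S else UNIV))"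
  have finU: "finite U" unfolding U_def by (rule finite_subset[of _ "Pow {..<m}"]) auto
  have sub: "{f. s \<le> card {a. a < m \<and> f a \<in> S}} \<subseteq> \<Union> (F ` U)"
  proof
    fix f assume "f \<in> {f. s \<le> card {a. a < m \<and> f a \<in> S}}"
    hence "s \<le> card {a. a < m \<and> f a \<in> S}" by simp
    then obtain A where A: "A \<subseteq> {a. a < m \<and> f a \<in> S}" "card A = s"
      using obtain_subset_with_card_n by metis
    hence "A \<in> U" unfolding U_def by auto
    moreover have "f \<in> F A" using A unfolding F_def by auto
    ultimately show "f \<in> \<Union> (F ` U)" by blast
  qed
  have "measure_pmf.prob (Pi_pmf {..<m} d (\<lambda>_. p)) {f. s \<le> card {a. a < m \<and> f a \<in> S}}
      \<le> measure_pmf.prob (Pi_pmf {..<m} d (\<lambda>_. p)) (\<Union> (F ` U))"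
    by (intro measure_pmf.finite_measure_mono sub) auto
  also have "\<dots> \<le> (\<Sum>A\<in>U. measure_pmf.prob (Pi_pmf {..<m} d (\<lambda>_. p)) (F A))"
    by (intro measure_pmf.finite_measure_subadditive_finite finU) auto
  also have "\<dots> = (\<Sum>A\<in>U. q ^ s)"
  proof (intro sum.cong refl)
    fix A assume "A \<in> U"
    hence A: "A \<subseteq> {..<m}" "card A = s" unfolding U_def by auto
    have "measure_pmf.prob (Pi_pmf {..<m} d (\<lambda>_. p)) (F A)
        = (\<Prod>a\<in>{..<m}. measure_pmf.prob p (if a \<in> A then S else UNIV))"
      unfolding F_def by (rule measure_Pi_pmf_Pi) auto
    also have "\<dots> = (\<Prod>a\<in>{..<m}. if a \<in> A then q else 1)"
      by (intro prod.cong) (auto simp: q_def)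
    also have "\<dots> = q ^ card ({..<m} \<inter> A)"
      by (simp add: prod.If_cases)
    also have "{..<m} \<inter> A = A" using A by auto
    finally show "measure_pmf.prob (Pi_pmf {..<m} d (\<lambda>_. p)) (F A) = q ^ s" using A by simp
  qed
  also have "\<dots> = real (m choose s) * q ^ s"
    by (simp add: U_def n_subsets)
  finally show ?thesis by (simp add: q_def)
qed

lemma pow_div_fact_le_exp:
  fixes x :: real assumes "x \<ge> 0"
  shows "x ^ n / fact n \<le> exp x"
proof -
  have S: "(\<lambda>k. x ^ k / fact k) sums exp x"
    using exp_converges[of x] by (simp add: divide_inverse_commute scaleR_conv_of_real)
  have "(\<Sum>k\<in>{n}. x ^ k / fact k) \<le> suminf (\<lambda>k. x ^ k / fact k)"
    by (rule sum_le_suminf) (use S assms in \<open>auto simp: sums_iff\<close>)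
  thus ?thesis using S by (simp add: sums_iff)
qed

lemma choose_pow_bound:
  fixes q L :: real
  assumes "q \<ge> 0" "real m * q \<le> L"
  shows "real (m choose s) * q ^ s \<le> exp (2 * L) / 2 ^ s"
proof -
  have L: "L \<ge> 0" using assms by (smt (verit) of_nat_0_le_iff mult_nonneg_nonneg)
  have "real (m choose s) * fact s \<le> real m ^ s"
    using binomial_fact_pow[of m s] by (metis of_nat_fact of_nat_le_iff of_nat_mult of_nat_power)
  hence "real (m choose s) \<le> real m ^ s / fact s"
    by (simp add: field_simps)
  hence "real (m choose s) * q ^ s \<le> real m ^ s / fact s * q ^ s"
    by (intro mult_right_mono) (use assms in auto)
  also have "\<dots> = (real m * q) ^ s / fact s" by (simp add: power_mult_distrib)
  also have "\<dots> \<le> L ^ s / fact s"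
    by (intro divide_right_mono power_mono) (use assms in auto)
  also have "\<dots> = (2 * L) ^ s / fact s / 2 ^ s" by (simp add: power_mult_distrib)
  also have "\<dots> \<le> exp (2 * L) / 2 ^ s"
    by (intro divide_right_mono pow_div_fact_le_exp) (use L in auto)
  finally show ?thesis .
qed

lemma pair_diag_bound:
  assumes "finite Out" "Out \<noteq> {}" "finite In" "In \<noteq> {}"
  shows "measure_pmf.prob (map_pmf Some (pair_pmf (pmf_of_set Out) (pmf_of_set In)))
           {x. \<exists>v. x = Some (v, v)} \<le> 1 / real (card In)"
proof -
  have eq: "Some -` {x. \<exists>v. x = Some (v, v)} = {p. \<exists>v. p = (v, v)}" by auto
  have "measure_pmf.prob (map_pmf Some (pair_pmf (pmf_of_set Out) (pmf_of_set In)))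
           {x. \<exists>v. x = Some (v, v)}
      = measure_pmf.prob (pair_pmf (pmf_of_set Out) (pmf_of_set In)) {p. \<exists>v. p = (v, v)}"
    by (simp add: measure_map_pmf eq)
  also have "\<dots> = measure_pmf.expectation (pmf_of_set Out)
      (\<lambda>x. measure_pmf.prob (map_pmf (Pair x) (pmf_of_set In)) {p. \<exists>v. p = (v, v)})"
    unfolding pair_pmf_def by (simp add: prob_bind_pmf map_pmf_def)
  also have "\<dots> \<le> measure_pmf.expectation (pmf_of_set Out) (\<lambda>x. 1 / real (card In))"
  proof (intro integral_mono)
    show "integrable (measure_pmf (pmf_of_set Out))
      (\<lambda>x. measure_pmf.prob (map_pmf (Pair x) (pmf_of_set In)) {p. \<exists>v. p = (v, v)})"
      by (rule integrable_pmf_bounded[where B=1]) auto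
    fix x
    have "measure_pmf.prob (map_pmf (Pair x) (pmf_of_set In)) {p. \<exists>v. p = (v, v)}
        = measure_pmf.prob (pmf_of_set In) {x}"
      by (simp add: measure_map_pmf)
    also have "\<dots> = pmf (pmf_of_set In) x" by (simp add: measure_pmf_single)
    also have "\<dots> \<le> 1 / real (card In)" using assms by (simp add: indicator_def)
    finally show "measure_pmf.prob (map_pmf (Pair x) (pmf_of_set In)) {p. \<exists>v. p = (v, v)}
        \<le> 1 / real (card In)" .
  qed auto
  also have "\<dots> = 1 / real (card In)" by simp
  finally show ?thesis .
qed

lemma arc_selfloop_bound:
  fixes n :: nat and \<delta> :: real and C :: "(nat \<times> nat) pmf"
  assumes supp: "\<And>v. v < n \<Longrightarrow> tp v \<in> set_pmf T"
    and dpos: "\<delta> > 0" and rho: "\<And>j. rho T J j > 0 \<Longrightarrow> rho T J j \<ge> \<delta>"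
    and npos: "n > 0"
  shows "measure_pmf.prob (arc_pmf n C I J tp) {x. \<exists>v. x = Some (v, v)}
    \<le> 2 / (\<delta> * n) + measure_pmf.prob C
         {c. rho T J (snd c) \<ge> \<delta> \<and> real (card {w. w < n \<and> J (tp w) (snd c)}) < \<delta> * n / 2}"
proof -
  define Bad where "Bad = {c :: nat \<times> nat. rho T J (snd c) \<ge> \<delta> \<and> real (card {w. w < n \<and> J (tp w) (snd c)}) < \<delta> * n / 2}"
  define g where "g = (\<lambda>c. (let Out = {v. v < n \<and> I (tp v) (fst c)};
            In = {w. w < n \<and> J (tp w) (snd c)}
        in if Out = {} \<or> In = {} then return_pmf None
           else map_pmf Some (pair_pmf (pmf_of_set Out) (pmf_of_set In))))"
  define SL where "SL = {x. \<exists>v. x = Some (v :: nat, v)}"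
  have pw: "measure_pmf.prob (g c) SL \<le> 2 / (\<delta> * n) + (indicator Bad c :: real)" for c
  proof -
    define Out where "Out = {v. v < n \<and> I (tp v) (fst c)}"
    define In where "In = {w. w < n \<and> J (tp w) (snd c)}"
    have fin: "finite Out" "finite In" unfolding Out_def In_def by auto
    have ge0: "0 \<le> 2 / (\<delta> * n) + indicator Bad c" using dpos by auto
    show ?thesis
    proof (cases "Out = {} \<or> In = {}")
      case True
      hence "g c = return_pmf None" unfolding g_def Out_def In_def Let_def by auto
      thus ?thesis using ge0 by (simp add: SL_def)
    next
      case False
      hence "g c = map_pmf Some (pair_pmf (pmf_of_set Out) (pmf_of_set In))"
        unfolding g_def Out_def In_def Let_def by auto
      hence "measure_pmf.prob (g c) SL \<le> 1 / real (card In)"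
        unfolding SL_def using pair_diag_bound[of Out In] fin False by simp
      also have "\<dots> \<le> 2 / (\<delta> * n) + indicator Bad c"
      proof (cases "real (card In) < \<delta> * n / 2")
        case True
        from False obtain w where w: "w < n" "J (tp w) (snd c)" unfolding In_def by auto
        have "0 < pmf T (tp w)" using supp[OF w(1)] by (simp add: set_pmf_eq')
        also have "pmf T (tp w) = measure_pmf.prob T {tp w}" by (simp add: measure_pmf_single)
        also have "\<dots> \<le> measure_pmf.prob T {k. J k (snd c)}"
          by (intro measure_pmf.finite_measure_mono) (use w in auto)
        finally have "rho T J (snd c) \<ge> \<delta>" using rho unfolding rho_def by auto
        hence "c \<in> Bad" using True unfolding Bad_def In_def by auto
        moreover have "card In \<ge> 1" using False fin by (simp add: Suc_le_eq card_gt_0_iff)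
        moreover have "0 \<le> 2 / (\<delta> * n)" using dpos by auto
        moreover have "1 / real (card In) \<le> 1" using \<open>card In \<ge> 1\<close> by simp
        moreover have "(indicator Bad c :: real) = 1" using \<open>c \<in> Bad\<close> by simp
        ultimately show ?thesis by linarith
      next
        case False
        hence "real (card In) \<ge> \<delta> * n / 2" by simp
        moreover have "\<delta> * n / 2 > 0" using dpos npos by auto
        ultimately have "1 / real (card In) \<le> 1 / (\<delta> * n / 2)"
          by (intro divide_left_mono) auto
        moreover have "1 / (\<delta> * n / 2) = 2 / (\<delta> * n)" by simp
        moreover have "(indicator Bad c :: real) \<ge> 0" by simp
        ultimately show ?thesis by (metis add_increasing2)
      qed
      finally show ?thesis .
    qed
  qed
  have "measure_pmf.prob (arc_pmf n C I J tp) SL = measure_pmf.expectation C (\<lambda>c. measure_pmf.prob (g c) SL)"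
    unfolding arc_pmf_def g_def by (rule prob_bind_pmf)
  also have "\<dots> \<le> measure_pmf.expectation C (\<lambda>c. 2 / (\<delta> * n) + indicator Bad c)"
    by (intro integral_mono pw integrable_pmf_bounded[where B=1]
        integrable_pmf_bounded[where B="2 / (\<delta> * n) + 1"]) (use dpos in \<open>auto simp: indicator_def\<close>)
  also have "\<dots> = 2 / (\<delta> * n) + measure_pmf.prob C Bad"
    by (subst Bochner_Integration.integral_add) (auto intro!: integrable_pmf_bounded[where B=1] simp: indicator_def)
  finally show ?thesis unfolding SL_def Bad_def .
qed

lemma map_pmf_bernoulli:
  fixes T :: "'a pmf"
  shows "map_pmf P T = bernoulli_pmf (measure_pmf.prob T {k. P k})"
proof (rule pmf_eqI)
  define q where "q = measure_pmf.prob T {k. P k}"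
  have q: "0 \<le> q" "q \<le> 1" unfolding q_def by auto
  fix b :: bool
  show "pmf (map_pmf P T) b = pmf (bernoulli_pmf (measure_pmf.prob T {k. P k})) b"
  proof (cases b)
    case True
    have "P -` {True} = {k. P k}" by auto
    thus ?thesis using True q by (simp add: pmf_map q_def)
  next
    case False
    have "P -` {False} = - {k. P k}" by auto
    hence "pmf (map_pmf P T) False = 1 - q"
      using measure_pmf.prob_compl[of "{k. P k}" T] by (simp add: pmf_map q_def Compl_eq_Diff_UNIV)
    thus ?thesis using False q by (simp add: q_def)
  qed
qed

lemma types_count_binomial:
  fixes T :: "nat pmf"
  shows "map_pmf (\<lambda>tp. card {w \<in> {..<n}. J (tp w) j}) (Pi_pmf {..<n} 0 (\<lambda>_. T))
       = binomial_pmf n (rho T J j)"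
proof -
  define f where "f = (\<lambda>k. J k j)"
  have "map_pmf (\<lambda>tp. card {w \<in> {..<n}. J (tp w) j}) (Pi_pmf {..<n} 0 (\<lambda>_. T))
      = map_pmf (\<lambda>h. card {w \<in> {..<n}. h w}) (map_pmf (\<lambda>h. f \<circ> h) (Pi_pmf {..<n} 0 (\<lambda>_. T)))"
    by (simp add: pmf.map_comp o_def f_def)
  also have "map_pmf (\<lambda>h. f \<circ> h) (Pi_pmf {..<n} 0 (\<lambda>_. T)) = Pi_pmf {..<n} (f 0) (\<lambda>_. map_pmf f T)"
    by (rule Pi_pmf_map[symmetric]) auto
  also have "map_pmf f T = bernoulli_pmf (rho T J j)"
    unfolding f_def rho_def by (rule map_pmf_bernoulli)
  also have "map_pmf (\<lambda>h. card {w \<in> {..<n}. h w}) (Pi_pmf {..<n} (f 0) (\<lambda>_. bernoulli_pmf (rho T J j)))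
       = binomial_pmf n (rho T J j)"
    by (rule binomial_pmf_altdef'[symmetric]) (auto simp: rho_def)
  finally show ?thesis .
qed

lemma types_count_small:
  fixes T :: "nat pmf" and \<delta> :: real and n :: nat
  assumes "n > 0" "\<delta> > 0" "rho T J j \<ge> \<delta>"
  shows "measure_pmf.prob (Pi_pmf {..<n} 0 (\<lambda>_. T))
           {tp. real (card {w. w < n \<and> J (tp w) j}) < \<delta> * n / 2} \<le> exp (- (\<delta>\<^sup>2 * n / 2))"
proof -
  define p where "p = rho T J j"
  have p: "p \<in> {0..1}" unfolding p_def rho_def by auto
  interpret binomial_distribution n p by standard (rule p)
  have "measure_pmf.prob (Pi_pmf {..<n} 0 (\<lambda>_. T))
           {tp. real (card {w. w < n \<and> J (tp w) j}) < \<delta> * n / 2}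
      = measure_pmf.prob (binomial_pmf n p) {x. real x < \<delta> * n / 2}"
    unfolding p_def types_count_binomial[symmetric] measure_map_pmf vimage_def by simp
  also have "\<dots> \<le> measure_pmf.prob (binomial_pmf n p) {x. real x \<le> n * p - \<delta> * n / 2}"
  proof (intro measure_pmf.finite_measure_mono subsetI)
    fix x assume "x \<in> {x. real x < \<delta> * n / 2}"
    moreover have "\<delta> * n \<le> p * n" using assms by (intro mult_right_mono) (auto simp: p_def)
    ultimately show "x \<in> {x. real x \<le> n * p - \<delta> * n / 2}" by (auto simp: algebra_simps)
  qed auto
  also have "\<dots> \<le> exp (-2 * (\<delta> * n / 2)\<^sup>2 / n)"
    by (rule prob_le) (use assms in auto)
  also have "-2 * (\<delta> * n / 2)\<^sup>2 / n = - (\<delta>\<^sup>2 * n / 2)"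
    using assms by (simp add: power2_eq_square field_simps)
  finally show ?thesis .
qed

lemma expect_bad_bound:
  fixes T :: "nat pmf" and C :: "(nat \<times> nat) pmf" and \<delta> :: real and n :: nat
  assumes "n > 0" "\<delta> > 0"
  shows "measure_pmf.expectation (Pi_pmf {..<n} 0 (\<lambda>_. T))
     (\<lambda>tp. measure_pmf.prob C
         {c. rho T J (snd c) \<ge> \<delta> \<and> real (card {w. w < n \<and> J (tp w) (snd c)}) < \<delta> * n / 2})
     \<le> exp (- (\<delta>\<^sup>2 * n / 2))"
proof -
  define Ty where "Ty = Pi_pmf {..<n} 0 (\<lambda>_. T)"
  define X where "X = {(tp, c :: nat \<times> nat). rho T J (snd c) \<ge> \<delta> \<and> real (card {w. w < n \<and> J (tp w) (snd c)}) < \<delta> * n / 2}"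
  have "measure_pmf.expectation Ty
     (\<lambda>tp. measure_pmf.prob C
         {c. rho T J (snd c) \<ge> \<delta> \<and> real (card {w. w < n \<and> J (tp w) (snd c)}) < \<delta> * n / 2})
     = measure_pmf.expectation Ty (\<lambda>tp. measure_pmf.prob (bind_pmf C (\<lambda>c. return_pmf (tp, c))) X)"
    by (intro Bochner_Integration.integral_cong refl)
       (simp add: map_pmf_def[symmetric] measure_map_pmf X_def vimage_def)
  also have "\<dots> = measure_pmf.prob (bind_pmf Ty (\<lambda>tp. bind_pmf C (\<lambda>c. return_pmf (tp, c)))) X"
    by (rule prob_bind_pmf[symmetric])
  also have "bind_pmf Ty (\<lambda>tp. bind_pmf C (\<lambda>c. return_pmf (tp, c)))
      = bind_pmf C (\<lambda>c. bind_pmf Ty (\<lambda>tp. return_pmf (tp, c)))"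
    by (rule bind_commute_pmf)
  also have "measure_pmf.prob \<dots> X
      = measure_pmf.expectation C (\<lambda>c. measure_pmf.prob (bind_pmf Ty (\<lambda>tp. return_pmf (tp, c))) X)"
    by (rule prob_bind_pmf)
  also have "\<dots> \<le> measure_pmf.expectation C (\<lambda>c. exp (- (\<delta>\<^sup>2 * n / 2)))"
  proof (intro integral_mono)
    show "integrable (measure_pmf C) (\<lambda>c. measure_pmf.prob (bind_pmf Ty (\<lambda>tp. return_pmf (tp, c))) X)"
      by (rule integrable_pmf_bounded[where B=1]) auto
    fix c :: "nat \<times> nat"
    have eq: "measure_pmf.prob (bind_pmf Ty (\<lambda>tp. return_pmf (tp, c))) X
      = measure_pmf.prob Ty {tp. rho T J (snd c) \<ge> \<delta> \<and> real (card {w. w < n \<and> J (tp w) (snd c)}) < \<delta> * n / 2}"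
      by (simp add: map_pmf_def[symmetric] measure_map_pmf X_def vimage_def)
    show "measure_pmf.prob (bind_pmf Ty (\<lambda>tp. return_pmf (tp, c))) X \<le> exp (- (\<delta>\<^sup>2 * n / 2))"
    proof (cases "rho T J (snd c) \<ge> \<delta>")
      case True
      show ?thesis unfolding eq using types_count_small[OF assms True] True by (simp add: Ty_def)
    next
      case False
      thus ?thesis unfolding eq by simp
    qed
  qed auto
  also have "\<dots> = exp (- (\<delta>\<^sup>2 * n / 2))" by simp
  finally show ?thesis unfolding Ty_def .
qed

lemma main_bound:
  fixes T :: "nat pmf" and C :: "(nat \<times> nat) pmf" and \<delta> \<mu> :: real and n s :: nat
  assumes npos: "n > 0" and dpos: "\<delta> > 0" and mu: "\<mu> > 0"
    and rho: "\<And>j. rho T J j > 0 \<Longrightarrow> rho T J j \<ge> \<delta>"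
  shows "measure_pmf.prob (CCI n \<mu> T C I J)
           {G. s \<le> card {a. a < num_arcs n \<mu> \<and> (\<exists>v. snd G a = Some (v, v))}}
         \<le> exp (2 * (\<mu> * (2 / \<delta> + 1))) / 2 ^ s + n * exp (- (\<delta>\<^sup>2 * n / 2))"
proof -
  define m where "m = num_arcs n \<mu>"
  define Ty where "Ty = Pi_pmf {..<n} 0 (\<lambda>_. T)"
  define SL where "SL = {x. \<exists>v. x = Some (v :: nat, v)}"
  define L where "L = \<mu> * (2 / \<delta> + 1)"
  define B where "B = exp (2 * L) / 2 ^ s"
  define Y where "Y = (\<lambda>tp. measure_pmf.prob C
         {c. rho T J (snd c) \<ge> \<delta> \<and> real (card {w. w < n \<and> J (tp w) (snd c)}) < \<delta> * n / 2})"
  define f where "f = (\<lambda>tp. measure_pmf.prob (Pi_pmf {..<m} None (\<lambda>_. arc_pmf n C I J tp))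
                              {arcs. s \<le> card {a. a < m \<and> arcs a \<in> SL}})"
  have m_le: "real m \<le> \<mu> * n"
    unfolding m_def num_arcs_def using mu by (simp add: of_nat_nat)
  have eqC: "CCI n \<mu> T C I J = bind_pmf Ty (\<lambda>tp. map_pmf (Pair tp) (Pi_pmf {..<m} None (\<lambda>_. arc_pmf n C I J tp)))"
    unfolding CCI_def Ty_def m_def map_pmf_def by simp
  have "measure_pmf.prob (CCI n \<mu> T C I J)
           {G. s \<le> card {a. a < num_arcs n \<mu> \<and> (\<exists>v. snd G a = Some (v, v))}}
      = measure_pmf.expectation Ty f"
    unfolding eqC prob_bind_pmf f_def by (simp add: measure_map_pmf vimage_def m_def SL_def)
  also have "\<dots> \<le> measure_pmf.expectation Ty (\<lambda>tp. B + n * Y tp)"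
  proof (intro integral_mono_AE)
    show "integrable (measure_pmf Ty) f" unfolding f_def
      by (rule integrable_pmf_bounded[where B=1]) auto
    show "integrable (measure_pmf Ty) (\<lambda>tp. B + n * Y tp)"
    proof (rule integrable_pmf_bounded[where B="\<bar>B\<bar> + n"])
      fix tp
      have "0 \<le> Y tp" "Y tp \<le> 1" unfolding Y_def by auto
      hence "0 \<le> n * Y tp" "n * Y tp \<le> n"
        by (simp_all add: mult_left_le)
      thus "\<bar>B + n * Y tp\<bar> \<le> \<bar>B\<bar> + n" by linarith
    qed
    show "AE tp in measure_pmf Ty. f tp \<le> B + n * Y tp"
      unfolding AE_measure_pmf_iff
    proof safe
      fix tp assume tp: "tp \<in> set_pmf Ty"
      have supp: "tp v \<in> set_pmf T" if "v < n" for v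
        using tp that unfolding Ty_def by (auto simp: set_Pi_pmf PiE_dflt_def)
      define q where "q = measure_pmf.prob (arc_pmf n C I J tp) SL"
      have q0: "q \<ge> 0" unfolding q_def by simp
      have qb: "q \<le> 2 / (\<delta> * n) + Y tp"
        unfolding q_def SL_def Y_def by (rule arc_selfloop_bound[OF supp dpos rho npos])
      have f1: "f tp \<le> real (m choose s) * q ^ s"
        unfolding f_def q_def by (rule prob_Pi_count_ge)
      have Y0: "Y tp \<ge> 0" unfolding Y_def by simp
      have B0: "B \<ge> 0" unfolding B_def by simp
      show "f tp \<le> B + n * Y tp"
      proof (cases "Y tp \<le> 1 / n")
        case True
        hence "q \<le> 2 / (\<delta> * n) + 1 / n" using qb by linarith
        also have "\<dots> = (2 / \<delta> + 1) / n" using dpos npos by (simp add: field_simps)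
        finally have "real m * q \<le> real m * ((2 / \<delta> + 1) / n)"
          by (intro mult_left_mono) auto
        also have "\<dots> \<le> \<mu> * n * ((2 / \<delta> + 1) / n)"
          by (intro mult_right_mono m_le) (use dpos in auto)
        also have "\<dots> = L" unfolding L_def using npos by (simp add: field_simps)
        finally have "real (m choose s) * q ^ s \<le> B"
          unfolding B_def by (intro choose_pow_bound q0)
        moreover have "n * Y tp \<ge> 0" using Y0 by simp
        ultimately show ?thesis using f1 by linarith
      next
        case False
        hence "1 < n * Y tp" using npos by (simp add: field_simps)
        moreover have "f tp \<le> 1" unfolding f_def by simp
        ultimately show ?thesis using B0 by linarith
      qed
    qed
  qed
  also have "\<dots> = B + n * measure_pmf.expectation Ty Y"
  proof -
    have iY: "integrable (measure_pmf Ty) Y" unfolding Y_def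
      by (rule integrable_pmf_bounded[where B=1]) auto
    show ?thesis
      by (subst Bochner_Integration.integral_add) (use iY in auto)
  qed
  also have "\<dots> \<le> B + n * exp (- (\<delta>\<^sup>2 * n / 2))"
    using expect_bad_bound[OF npos dpos, where T=T and C=C and J=J] unfolding Y_def Ty_def
    by (intro add_left_mono mult_left_mono) auto
  finally show ?thesis unfolding B_def L_def .
qed

theorem lemma8:
  fixes T :: "nat pmf" and C :: "(nat \<times> nat) pmf"
    and I J :: "nat \<Rightarrow> nat \<Rightarrow> bool" and \<mu> \<epsilon> \<tau> :: real
  assumes mu_pos: "\<mu> > 0"
    and eps_pos: "\<epsilon> > 0"
    and moment: "integrable (measure_pmf T) (\<lambda>k. real k powr (1 + \<epsilon>))"
    and lam_inf: "\<exists>\<delta>>0. \<forall>i. lam T I i > 0 \<longrightarrow> lam T I i \<ge> \<delta>"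
    and rho_inf: "\<exists>\<delta>>0. \<forall>j. rho T J j > 0 \<longrightarrow> rho T J j \<ge> \<delta>"
    and tau: "0 < \<tau>" "\<tau> < 1"
  shows "\<forall>r>0. \<forall>\<nu><\<tau>. eventually (\<lambda>n.
           measure_pmf.prob (CCI n \<mu> T C I J)
             {G. \<exists>t\<in>{1..u_up T n \<tau>}. real (self_loops (num_arcs n \<mu>) t G) > real n powr (1 - \<nu>)}
           \<le> real n powr (- r)) sequentially"
proof (intro allI impI)
  fix r \<nu> :: real
  assume r: "r > 0" and nu: "\<nu> < \<tau>"
  define a where "a = 1 - \<nu>"
  have apos: "a > 0" using nu tau unfolding a_def by simp
  obtain \<delta> where dpos: "\<delta> > 0" and rho: "\<And>j. rho T J j > 0 \<Longrightarrow> rho T J j \<ge> \<delta>"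
    using rho_inf by blast
  define L where "L = \<mu> * (2 / \<delta> + 1)"
  define A where "A = 2 * exp (2 * L)"
  define d where "d = \<delta>\<^sup>2 / 2"
  have dd: "d > 0" using dpos unfolding d_def by simp
  have t1: "(\<lambda>n::nat. real n powr r * 2 powr (- (real n powr a))) \<longlonglongrightarrow> 0"
    using apos r by real_asymp
  have t2: "(\<lambda>n::nat. real n powr r * (real n * exp (- (d * real n)))) \<longlonglongrightarrow> 0"
    using dd r by real_asymp
  have "(\<lambda>n::nat. A * (real n powr r * 2 powr (- (real n powr a)))
                 + real n powr r * (real n * exp (- (d * real n)))) \<longlonglongrightarrow> A * 0 + 0"
    by (intro tendsto_add tendsto_mult t1 t2 tendsto_const)
  hence "eventually (\<lambda>n::nat. A * (real n powr r * 2 powr (- (real n powr a)))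
                 + real n powr r * (real n * exp (- (d * real n))) < 1) sequentially"
    by (intro order_tendstoD(2)) auto
  moreover have "eventually (\<lambda>n::nat. n > 0) sequentially" by (rule eventually_gt_at_top)
  ultimately show "eventually (\<lambda>n.
           measure_pmf.prob (CCI n \<mu> T C I J)
             {G. \<exists>t\<in>{1..u_up T n \<tau>}. real (self_loops (num_arcs n \<mu>) t G) > real n powr (1 - \<nu>)}
           \<le> real n powr (- r)) sequentially"
  proof eventually_elim
    case (elim n)
    note h = elim(1) and npos = elim(2)
    define s where "s = nat \<lfloor>real n powr a\<rfloor>"
    define m where "m = num_arcs n \<mu>"
    have s_le: "real s \<le> real n powr a" unfolding s_def by simp
    have s_ge: "real s \<ge> real n powr a - 1" unfolding s_def by linarith
    have sub: "{G. \<exists>t\<in>{1..u_up T n \<tau>}. real (self_loops m t G) > real n powr (1 - \<nu>)}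
        \<subseteq> {G. s \<le> card {a. a < m \<and> (\<exists>v. snd G a = Some (v, v))}}"
    proof safe
      fix G t assume "real (self_loops m t G) > real n powr (1 - \<nu>)"
      moreover have "self_loops m t G \<le> card {a. a < m \<and> (\<exists>v. snd G a = Some (v, v))}"
        unfolding self_loops_def by (intro card_mono) auto
      ultimately have "real s < real (card {a. a < m \<and> (\<exists>v. snd G a = Some (v, v))})"
        using s_le unfolding a_def by linarith
      thus "s \<le> card {a. a < m \<and> (\<exists>v. snd G a = Some (v, v))}" by simp
    qed
    have "measure_pmf.prob (CCI n \<mu> T C I J)
             {G. \<exists>t\<in>{1..u_up T n \<tau>}. real (self_loops m t G) > real n powr (1 - \<nu>)}
        \<le> measure_pmf.prob (CCI n \<mu> T C I J) {G. s \<le> card {a. a < m \<and> (\<exists>v. snd G a = Some (v, v))}}"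
      by (intro measure_pmf.finite_measure_mono sub) auto
    also have "\<dots> \<le> exp (2 * L) / 2 ^ s + n * exp (- (\<delta>\<^sup>2 * n / 2))"
      unfolding m_def L_def by (rule main_bound[OF npos dpos mu_pos rho])
    also have "exp (2 * L) / 2 ^ s \<le> A * 2 powr (- (real n powr a))"
    proof -
      have "(2::real) ^ s = 2 powr real s" by (simp add: powr_realpow)
      also have "\<dots> \<ge> 2 powr (real n powr a - 1)" using s_ge by (intro powr_mono) auto
      finally have "2 ^ s \<ge> 2 powr (real n powr a) / 2" by (simp add: powr_diff)
      hence "exp (2 * L) / 2 ^ s \<le> exp (2 * L) / (2 powr (real n powr a) / 2)"
        by (intro divide_left_mono) auto
      also have "\<dots> = A * 2 powr (- (real n powr a))"
        unfolding A_def by (simp add: powr_minus divide_simps)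
      finally show ?thesis .
    qed
    also have "\<delta>\<^sup>2 * n / 2 = d * n" unfolding d_def by simp
    finally have P: "measure_pmf.prob (CCI n \<mu> T C I J)
             {G. \<exists>t\<in>{1..u_up T n \<tau>}. real (self_loops m t G) > real n powr (1 - \<nu>)}
        \<le> A * 2 powr (- (real n powr a)) + n * exp (- (d * n))" by simp
    have "(A * 2 powr (- (real n powr a)) + n * exp (- (d * n))) * real n powr r < 1"
      using h by (simp add: algebra_simps)
    hence "A * 2 powr (- (real n powr a)) + n * exp (- (d * n)) < 1 / real n powr r"
      using npos by (simp add: field_simps)
    also have "1 / real n powr r = real n powr (- r)" by (simp add: powr_minus_divide)
    finally show ?case using P unfolding m_def by linarith
  qed
qed

end
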